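(* Let $G=G_2$ and $K=SU(3)\subseteq G_2$. For $X,Y\in\mathfrak p\subseteq\mathfrak g_2$, $[X,Y]=0$ if and only if $[X,Y]_{\mathfrak k}=0$.
   Context: $G_2=\operatorname{Aut}(\mathbb{O})\subseteq SO(7)$ is the automorphism group of the octonions acting on $\operatorname{Im}\mathbb{O}$, and $K=\{g\in G_2: g(i)=i\}\cong SU(3)$ for a fixed unit imaginary octonion $i$. Let $\mathfrak g=\mathfrak g_2$ and $\mathfrak k$ be their Lie algebras, $\langle X,Y\rangle_0=-\operatorname{tr}(XY)$, $\mathfrak p$ the $\langle\cdot,\cdot\rangle_0$-orthogonal complement of $\mathfrak k$ in $\mathfrak g$, and $X=X_{\mathfrak k}+X_{\mathfrak p}$ the corresponding decomposition. *)

theory Defs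
  imports "HOL-Analysis.Analysis"
begin

text \<open>Structure constants of the 7-dimensional cross product (imaginary octonion
  product) with respect to the orthonormal basis e_0,...,e_6 of Im O, indices mod 7:
  the quaternionic triples are (a, a+1, a+3), i.e. e_a e_(a+1) = e_(a+3) for all a.\<close>
definition eps7 :: "7 \<Rightarrow> 7 \<Rightarrow> 7 \<Rightarrow> real" where
  "eps7 i j k =
     (if (j - i, k - i) \<in> {(1,3), (2,6), (4,5)} then 1
      else if (j - i, k - i) \<in> {(3,1), (6,2), (5,4)} then -1 else 0)"

definition cross7 :: "real^7 \<Rightarrow> real^7 \<Rightarrow> real^7" where
  "cross7 u v = (\<chi> k. \<Sum>i\<in>UNIV. \<Sum>j\<in>UNIV. eps7 i j k * u$i * v$j)"

type_synonym octonion = "real \<times> (real^7)"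

definition omult :: "octonion \<Rightarrow> octonion \<Rightarrow> octonion" where
  "omult p q = (fst p * fst q - inner (snd p) (snd q),
                fst p *\<^sub>R snd q + fst q *\<^sub>R snd p + cross7 (snd p) (snd q))"

definition G2 :: "(real^7^7) set" where
  "G2 = {g. \<exists>\<phi> :: octonion \<Rightarrow> octonion. linear \<phi> \<and> bij \<phi> \<and>
            (\<forall>p q. \<phi> (omult p q) = omult (\<phi> p) (\<phi> q)) \<and>
            (\<forall>u. \<phi> (0, u) = (0, g *v u))}"

definition K_stab :: "real^7 \<Rightarrow> (real^7^7) set" where
  "K_stab i = {g \<in> G2. g *v i = i}"

fun mpow :: "real^'n^'n \<Rightarrow> nat \<Rightarrow> real^'n^'n" where
  "mpow X 0 = mat 1"
| "mpow X (Suc n) = X ** mpow X n"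

definition mexp :: "real^'n^'n \<Rightarrow> real^'n^'n" where
  "mexp X = (\<Sum>n. (1 / fact n) *\<^sub>R mpow X n)"

definition lie_algebra :: "(real^'n^'n) set \<Rightarrow> (real^'n^'n) set" where
  "lie_algebra S = {X. \<forall>t::real. mexp (t *\<^sub>R X) \<in> S}"

definition lie_bracket :: "real^'n^'n \<Rightarrow> real^'n^'n \<Rightarrow> real^'n^'n" where
  "lie_bracket X Y = X ** Y - Y ** X"

definition g2 :: "(real^7^7) set" where
  "g2 = lie_algebra G2"

definition k_alg :: "real^7 \<Rightarrow> (real^7^7) set" where
  "k_alg i = lie_algebra (K_stab i)"

definition form0 :: "real^'n^'n \<Rightarrow> real^'n^'n \<Rightarrow> real" where
  "form0 X Y = - trace (X ** Y)"

definition p_space :: "real^7 \<Rightarrow> (real^7^7) set" where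
  "p_space i = {X \<in> g2. \<forall>Z \<in> k_alg i. form0 X Z = 0}"

definition k_part :: "real^7 \<Rightarrow> real^7^7 \<Rightarrow> real^7^7" where
  "k_part i X = (THE Z. Z \<in> k_alg i \<and> X - Z \<in> p_space i)"

end

theory Submission
  imports Defs
begin


lemma exhaust_7:
  fixes x :: 7
  shows "x = 0 \<or> x = 1 \<or> x = 2 \<or> x = 3 \<or> x = 4 \<or> x = 5 \<or> x = 6"
proof (induct x)
  case (of_int z)
  then have "z = 0 \<or> z = 1 \<or> z = 2 \<or> z = 3 \<or> z = 4 \<or> z = 5 \<or> z = 6" by fastforce
  then show ?case by auto
qed

lemma UNIV_7: "(UNIV::7 set) = {0,1,2,3,4,5,6}"
  using exhaust_7 by auto

lemma sum7: "sum f (UNIV::7 set) = f 0 + f 1 + f 2 + f 3 + f 4 + f 5 + f 6"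
  unfolding UNIV_7 by (simp add: add.assoc)

lemma forall_7: "(\<forall>i::7. P i) \<longleftrightarrow> P 0 \<and> P 1 \<and> P 2 \<and> P 3 \<and> P 4 \<and> P 5 \<and> P 6"
  by (metis exhaust_7)

lemma cross7_0: "cross7 u v $ 0 = u$1 * v$3 + u$2 * v$6 - u$3 * v$1 + u$4 * v$5 - u$5 * v$4 - u$6 * v$2"
  by (simp add: cross7_def sum7 eps7_def)

lemma cross7_1: "cross7 u v $ 1 = - u$0 * v$3 + u$2 * v$4 + u$3 * v$0 - u$4 * v$2 + u$5 * v$6 - u$6 * v$5"
  by (simp add: cross7_def sum7 eps7_def)

lemma cross7_2: "cross7 u v $ 2 = - u$0 * v$6 - u$1 * v$4 + u$3 * v$5 + u$4 * v$1 - u$5 * v$3 + u$6 * v$0"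
  by (simp add: cross7_def sum7 eps7_def)

lemma cross7_3: "cross7 u v $ 3 = u$0 * v$1 - u$1 * v$0 - u$2 * v$5 + u$4 * v$6 + u$5 * v$2 - u$6 * v$4"
  by (simp add: cross7_def sum7 eps7_def)

lemma cross7_4: "cross7 u v $ 4 = - u$0 * v$5 + u$1 * v$2 - u$2 * v$1 - u$3 * v$6 + u$5 * v$0 + u$6 * v$3"
  by (simp add: cross7_def sum7 eps7_def)

lemma cross7_5: "cross7 u v $ 5 = u$0 * v$4 - u$1 * v$6 + u$2 * v$3 - u$3 * v$2 - u$4 * v$0 + u$6 * v$1"
  by (simp add: cross7_def sum7 eps7_def)

lemma cross7_6: "cross7 u v $ 6 = u$0 * v$2 + u$1 * v$5 - u$2 * v$0 + u$3 * v$4 - u$4 * v$3 - u$5 * v$1"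
  by (simp add: cross7_def sum7 eps7_def)

lemmas cross7_comps = cross7_0 cross7_1 cross7_2 cross7_3 cross7_4 cross7_5 cross7_6

lemma inner7: "inner (u::real^7) v = u$0 * v$0 + u$1 * v$1 + u$2 * v$2 + u$3 * v$3 + u$4 * v$4 + u$5 * v$5 + u$6 * v$6"
  by (simp add: inner_vec_def sum7)

lemmas vc = vec_eq_iff forall_7 cross7_comps inner7 vector_add_component vector_minus_component
  vector_scaleR_component vector_uminus_component zero_index real_scaleR_def

lemma C_add_l: "cross7 (a + b) c = cross7 a c + cross7 b c"
  unfolding vc by (intro conjI; algebra)
lemma C_add_r: "cross7 c (a + b) = cross7 c a + cross7 c b"
  unfolding vc by (intro conjI; algebra)
lemma C_diff_l: "cross7 (a - b) c = cross7 a c - cross7 b c"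
  unfolding vc by (intro conjI; algebra)
lemma C_diff_r: "cross7 c (a - b) = cross7 c a - cross7 c b"
  unfolding vc by (intro conjI; algebra)
lemma C_scale_l: "cross7 (r *\<^sub>R a) c = r *\<^sub>R cross7 a c"
  unfolding vc by (intro conjI; algebra)
lemma C_scale_r: "cross7 c (r *\<^sub>R a) = r *\<^sub>R cross7 c a"
  unfolding vc by (intro conjI; algebra)
lemma C_uminus_l: "cross7 (- a) c = - cross7 a c"
  unfolding vc by (intro conjI; algebra)
lemma C_uminus_r: "cross7 c (- a) = - cross7 c a"
  unfolding vc by (intro conjI; algebra)
lemma C_zero_l[simp]: "cross7 0 c = 0"
  unfolding vc by (intro conjI; algebra)
lemma C_zero_r[simp]: "cross7 c 0 = 0"
  unfolding vc by (intro conjI; algebra)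
lemma C_anti: "cross7 b a = - cross7 a b"
  unfolding vc by (intro conjI; algebra)
lemma C_self[simp]: "cross7 a a = 0"
  unfolding vc by (intro conjI; algebra)
lemma C_inner: "inner (cross7 a b) c = inner a (cross7 b c)"
  unfolding vc by algebra
lemma I5: "cross7 a (cross7 c b) + cross7 c (cross7 a b) = inner a b *\<^sub>R c + inner c b *\<^sub>R a - (2 * inner a c) *\<^sub>R b"
  unfolding vc by (intro conjI; algebra)
lemma C_norm: "inner (cross7 a b) (cross7 a b) = inner a a * inner b b - (inner a b)^2"
  unfolding vc by algebra
lemma linear_cross7: "linear (cross7 c)"
  by (rule linearI) (simp_all add: C_add_r C_scale_r)



lemma mpow_scaleR: "mpow (t *\<^sub>R X) n = (t ^ n) *\<^sub>R mpow X n"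
  by (induct n) (auto simp: vec_eq_iff matrix_matrix_mult_def sum_distrib_left mult_ac)

lemma scaleR_mv: "(c *\<^sub>R M) *v u = c *\<^sub>R (M *v (u::real^'n))"
  by (simp add: matrix_vector_mult_def vec_eq_iff sum_distrib_left mult.assoc)

definition rs :: "real^'n^'n \<Rightarrow> real" where "rs X = (\<Sum>a\<in>UNIV. \<Sum>b\<in>UNIV. \<bar>X$a$b\<bar>)"

lemma rs_nonneg: "0 \<le> rs X" by (simp add: rs_def sum_nonneg)

lemma row_le_rs: "(\<Sum>k\<in>UNIV. \<bar>X$a$k\<bar>) \<le> rs X"
  unfolding rs_def by (rule member_le_sum) (auto intro: sum_nonneg)

lemma mpow_bound: "\<bar>mpow X n $ a $ b\<bar> \<le> rs X ^ n"
proof (induct n arbitrary: a b)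
  case 0 then show ?case by (simp add: mat_def)
next
  case (Suc n)
  have "\<bar>mpow X (Suc n) $ a $ b\<bar> = \<bar>\<Sum>k\<in>UNIV. X$a$k * mpow X n $ k $ b\<bar>"
    by (simp add: matrix_matrix_mult_def)
  also have "\<dots> \<le> (\<Sum>k\<in>UNIV. \<bar>X$a$k\<bar> * \<bar>mpow X n $ k $ b\<bar>)"
    by (rule order_trans[OF sum_abs]) (simp add: abs_mult)
  also have "\<dots> \<le> (\<Sum>k\<in>UNIV. \<bar>X$a$k\<bar> * rs X ^ n)"
    by (rule sum_mono) (simp add: mult_left_mono Suc)
  also have "\<dots> = (\<Sum>k\<in>UNIV. \<bar>X$a$k\<bar>) * rs X ^ n" by (simp add: sum_distrib_right)
  also have "\<dots> \<le> rs X * rs X ^ n"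
    by (rule mult_right_mono[OF row_le_rs]) (simp add: rs_nonneg)
  finally show ?case by simp
qed

lemma vbound: "\<bar>(mpow X n *v u) $ k\<bar> \<le> rs X ^ n * (\<Sum>j\<in>UNIV. \<bar>u$j\<bar>)"
proof -
  have "\<bar>(mpow X n *v u) $ k\<bar> = \<bar>\<Sum>j\<in>UNIV. mpow X n $ k $ j * u $ j\<bar>"
    by (simp add: matrix_vector_mult_def)
  also have "\<dots> \<le> (\<Sum>j\<in>UNIV. \<bar>mpow X n $ k $ j\<bar> * \<bar>u $ j\<bar>)"
    by (rule order_trans[OF sum_abs]) (simp add: abs_mult)
  also have "\<dots> \<le> (\<Sum>j\<in>UNIV. rs X ^ n * \<bar>u $ j\<bar>)"
    by (rule sum_mono) (simp add: mult_right_mono mpow_bound)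
  finally show ?thesis by (simp add: sum_distrib_left)
qed

lemma norm_mat_le: "norm (M::real^'n^'m) \<le> (\<Sum>a\<in>UNIV. \<Sum>b\<in>UNIV. \<bar>M$a$b\<bar>)"
proof -
  have "norm M \<le> (\<Sum>a\<in>UNIV. norm (M$a))" unfolding norm_vec_def by (rule L2_set_le_sum) simp
  also have "\<dots> \<le> (\<Sum>a\<in>UNIV. \<Sum>b\<in>UNIV. \<bar>M$a$b\<bar>)" by (rule sum_mono) (rule norm_le_l1_cart)
  finally show ?thesis .
qed

lemma mexp_summable: "summable (\<lambda>n. (1 / fact n) *\<^sub>R mpow (Y::real^'n^'n) n)"
proof (rule summable_comparison_test')
  show "summable (\<lambda>n. (real CARD('n) * real CARD('n)) * (inverse (fact n) * rs Y ^ n))"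
    by (intro summable_mult summable_exp)
  fix n :: nat
  have "norm ((1 / fact n) *\<^sub>R mpow Y n) = (1 / fact n) * norm (mpow Y n)" by simp
  also have "\<dots> \<le> (1 / fact n) * (\<Sum>a\<in>(UNIV::'n set). \<Sum>b\<in>(UNIV::'n set). rs Y ^ n)"
    by (intro mult_left_mono order_trans[OF norm_mat_le] sum_mono mpow_bound) simp_all
  also have "\<dots> = (real CARD('n) * real CARD('n)) * (inverse (fact n) * rs Y ^ n)"
    by (simp add: field_simps)
  finally show "norm ((1 / fact n) *\<^sub>R mpow Y n) \<le> (real CARD('n) * real CARD('n)) * (inverse (fact n) * rs Y ^ n)" .
qed

lemma linear_mv_comp: "linear (\<lambda>M::real^'n^'m. (M *v u) $ k)"
  by (rule linearI) (simp_all add: matrix_vector_mult_def sum.distrib sum_distrib_left algebra_simps)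

lemma mexp_vec: "(mexp Y *v u) $ k = (\<Sum>n. ((1 / fact n) *\<^sub>R mpow (Y::real^'n^'n) n *v u) $ k)"
proof -
  have bl: "bounded_linear (\<lambda>M::real^'n^'n. (M *v u) $ k)"
    using linear_mv_comp linear_conv_bounded_linear by blast
  from bounded_linear.suminf[OF bl mexp_summable[of Y]] show ?thesis
    unfolding mexp_def by simp
qed

definition cf :: "real^'n^'n \<Rightarrow> real^'n \<Rightarrow> 'n \<Rightarrow> nat \<Rightarrow> real" where
  "cf X u k n = (mpow X n *v u) $ k / fact n"

lemma E_series: "(mexp (t *\<^sub>R X) *v u) $ k = (\<Sum>n. cf X u k n * t ^ n)"
  unfolding mexp_vec
  by (rule suminf_cong) (simp add: mpow_scaleR scaleR_mv cf_def)

lemma cf_summable: "summable (\<lambda>n. cf X u k n * y ^ n)"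
proof (rule summable_comparison_test')
  show "summable (\<lambda>n. (\<Sum>j\<in>UNIV. \<bar>u$j\<bar>) * (inverse (fact n) * (rs X * \<bar>y\<bar>) ^ n))"
    by (intro summable_mult summable_exp)
  fix n :: nat
  have "norm (cf X u k n * y ^ n) = \<bar>(mpow X n *v u) $ k\<bar> * \<bar>y\<bar> ^ n / fact n"
    by (simp add: cf_def abs_mult power_abs)
  also have "\<dots> \<le> (rs X ^ n * (\<Sum>j\<in>UNIV. \<bar>u$j\<bar>)) * \<bar>y\<bar> ^ n / fact n"
    by (intro divide_right_mono mult_right_mono vbound) simp_all
  also have "\<dots> = (\<Sum>j\<in>UNIV. \<bar>u$j\<bar>) * (inverse (fact n) * (rs X * \<bar>y\<bar>) ^ n)"
    by (simp add: field_simps power_mult_distrib)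
  finally show "norm (cf X u k n * y ^ n) \<le> (\<Sum>j\<in>UNIV. \<bar>u$j\<bar>) * (inverse (fact n) * (rs X * \<bar>y\<bar>) ^ n)" .
qed

lemma diffs_cf: "diffs (cf X u k) n = (\<Sum>j\<in>UNIV. X$k$j * cf X u j n)"
proof -
  have "diffs (cf X u k) n = of_nat (Suc n) * ((X *v (mpow X n *v u)) $ k / fact (Suc n))"
    by (simp add: diffs_def cf_def matrix_vector_mul_assoc)
  also have "\<dots> = (X *v (mpow X n *v u)) $ k / fact n"
  proof -
    have "fact (Suc n) = real (Suc n) * (fact n :: real)" by (simp only: fact_Suc)
    then show ?thesis by (simp del: of_nat_Suc)
  qed
  also have "\<dots> = (\<Sum>j\<in>UNIV. X$k$j * cf X u j n)"
    by (simp add: matrix_vector_mult_def cf_def sum_divide_distrib[symmetric])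
  finally show ?thesis .
qed

lemma E_deriv: "((\<lambda>t. (mexp (t *\<^sub>R X) *v u) $ k) has_real_derivative (X *v (mexp (t *\<^sub>R X) *v u)) $ k) (at t)"
proof -
  have eq: "(\<lambda>t. (mexp (t *\<^sub>R X) *v u) $ k) = (\<lambda>t. \<Sum>n. cf X u k n * t ^ n)"
    by (rule ext) (rule E_series)
  have d: "((\<lambda>t. \<Sum>n. cf X u k n * t ^ n) has_real_derivative (\<Sum>n. diffs (cf X u k) n * t ^ n)) (at t)"
    by (rule termdiffs_strong_converges_everywhere) (rule cf_summable)
  have "(\<Sum>n. diffs (cf X u k) n * t ^ n) = (\<Sum>n. \<Sum>j\<in>UNIV. X$k$j * (cf X u j n * t ^ n))"
    by (simp add: diffs_cf sum_distrib_right mult.assoc)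
  also have "\<dots> = (\<Sum>j\<in>UNIV. \<Sum>n. X$k$j * (cf X u j n * t ^ n))"
    by (rule suminf_sum) (intro summable_mult cf_summable)
  also have "\<dots> = (\<Sum>j\<in>UNIV. X$k$j * (\<Sum>n. cf X u j n * t ^ n))"
    by (simp add: suminf_mult cf_summable)
  also have "\<dots> = (\<Sum>j\<in>UNIV. X$k$j * (mexp (t *\<^sub>R X) *v u) $ j)"
    by (simp add: E_series)
  also have "\<dots> = (X *v (mexp (t *\<^sub>R X) *v u)) $ k"
    by (simp add: matrix_vector_mult_def)
  finally show ?thesis using d eq by simp
qed

lemma E_zero: "mexp (0 *\<^sub>R X) *v u = u"
proof -
  have "(mexp (0 *\<^sub>R X) *v u) $ k = u $ k" for k
    unfolding E_series powser_zero by (simp add: cf_def)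
  then show ?thesis by (simp add: vec_eq_iff)
qed



lemma mexp0[simp]: "mexp (0::real^'n^'n) *v u = u"
  using E_zero[of "0::real^'n^'n" u] by simp

definition vd :: "(real \<Rightarrow> real^7) \<Rightarrow> real^7 \<Rightarrow> real \<Rightarrow> bool" where
  "vd f f' t \<longleftrightarrow> (\<forall>k. ((\<lambda>s. f s $ k) has_real_derivative f' $ k) (at t))"

lemma vd_E: "vd (\<lambda>s. mexp (s *\<^sub>R X) *v u) (X *v (mexp (t *\<^sub>R X) *v u)) t"
  unfolding vd_def using E_deriv by blast

lemma vd_mat: "vd f f' t \<Longrightarrow> vd (\<lambda>s. M *v f s) (M *v f') t"
  unfolding vd_def matrix_vector_mult_def by (auto intro!: DERIV_sum DERIV_cmult)

lemma vd_diff: "vd f f' t \<Longrightarrow> vd g g' t \<Longrightarrow> vd (\<lambda>s. f s - g s) (f' - g') t"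
  unfolding vd_def by (auto intro!: DERIV_diff)

lemma vd_const: "vd (\<lambda>s. c) 0 t"
  unfolding vd_def by simp

lemma DERIV_prod3:
  assumes "(a has_real_derivative a') (at t)" "(b has_real_derivative b') (at t)"
  shows "((\<lambda>s. c * a s * b s) has_real_derivative (c * a' * b t + c * a t * b')) (at t)"
  by (rule DERIV_cong[OF DERIV_mult[OF DERIV_cmult[OF assms(1)] assms(2)]]) (simp add: algebra_simps)

lemma vd_cross: assumes "vd f f' t" "vd g g' t"
  shows "vd (\<lambda>s. cross7 (f s) (g s)) (cross7 f' (g t) + cross7 (f t) g') t"
  unfolding vd_def
proof
  fix k
  have "((\<lambda>s. \<Sum>i\<in>UNIV. \<Sum>j\<in>UNIV. eps7 i j k * f s $ i * g s $ j) has_real_derivative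
     (\<Sum>i\<in>UNIV. \<Sum>j\<in>UNIV. eps7 i j k * f' $ i * g t $ j + eps7 i j k * f t $ i * g' $ j)) (at t)"
    using assms unfolding vd_def by (intro DERIV_sum DERIV_prod3) auto
  then show "((\<lambda>s. cross7 (f s) (g s) $ k) has_real_derivative (cross7 f' (g t) + cross7 (f t) g') $ k) (at t)"
    by (simp add: cross7_def sum.distrib)
qed

lemma vd_inner: assumes "vd f f' t" "vd g g' t"
  shows "((\<lambda>s. inner (f s) (g s)) has_real_derivative (inner f' (g t) + inner (f t) g')) (at t)"
proof -
  have "((\<lambda>s. \<Sum>i\<in>UNIV. 1 * f s $ i * g s $ i) has_real_derivative
     (\<Sum>i\<in>UNIV. 1 * f' $ i * g t $ i + 1 * f t $ i * g' $ i)) (at t)"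
    using assms unfolding vd_def by (intro DERIV_sum DERIV_prod3) auto
  then show ?thesis by (simp add: inner_vec_def sum.distrib)
qed

definition isder :: "real^7^7 \<Rightarrow> bool" where
  "isder X \<longleftrightarrow> (\<forall>u v. X *v cross7 u v = cross7 (X *v u) v + cross7 u (X *v v))"
definition isskew :: "real^7^7 \<Rightarrow> bool" where
  "isskew X \<longleftrightarrow> (\<forall>u v. inner (X *v u) v = - inner u (X *v v))"
definition pres :: "real^7^7 \<Rightarrow> bool" where
  "pres g \<longleftrightarrow> (\<forall>u v. g *v cross7 u v = cross7 (g *v u) (g *v v)) \<and> (\<forall>u v. inner (g *v u) (g *v v) = inner u v)"

lemma skew_ode: assumes sk: "isskew X" and d: "\<And>s. vd G (X *v G s) s" and z: "G 0 = 0"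
  shows "G t = 0"
proof -
  have "\<forall>s. ((\<lambda>s. inner (G s) (G s)) has_real_derivative 0) (at s)"
  proof
    fix s
    have "((\<lambda>s. inner (G s) (G s)) has_real_derivative (inner (X *v G s) (G s) + inner (G s) (X *v G s))) (at s)"
      by (rule vd_inner[OF d d])
    moreover have "inner (X *v G s) (G s) + inner (G s) (X *v G s) = 0"
      using sk unfolding isskew_def by simp
    ultimately show "((\<lambda>s. inner (G s) (G s)) has_real_derivative 0) (at s)" by simp
  qed
  then have "inner (G t) (G t) = inner (G 0) (G 0)" by (rule DERIV_isconst_all)
  with z show ?thesis by simp
qed

lemma G2_pres: assumes "g \<in> G2" shows "pres g"
proof -
  obtain \<phi> :: "octonion \<Rightarrow> octonion" where lin: "linear \<phi>" and bj: "bij \<phi>"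
    and hom: "\<forall>p q. \<phi> (omult p q) = omult (\<phi> p) (\<phi> q)" and im: "\<forall>u. \<phi> (0,u) = (0, g *v u)"
    using assms unfolding G2_def by blast
  have one_l: "omult (1,0) p = p" for p by (cases p) (simp add: omult_def)
  have one_r: "omult p (1,0) = p" for p by (cases p) (simp add: omult_def)
  define e where "e = \<phi> (1,0)"
  have le: "\<phi> p = omult e (\<phi> p)" for p using hom one_l unfolding e_def by metis
  obtain p0 where "\<phi> p0 = (1,0)" using bj unfolding bij_def surj_def by metis
  then have e1: "e = (1,0)" using le[of p0] one_r by metis
  have phia: "\<phi> (a, 0) = (a, 0)" for a
  proof -
    have "(a, 0::real^7) = a *\<^sub>R (1,0)" by simp
    then have "\<phi> (a,0) = a *\<^sub>R \<phi> (1,0)" using linear_scale[OF lin] by metis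
    then show ?thesis using e1 e_def by simp
  qed
  have phi: "\<phi> (a, w) = (a, g *v w)" for a w
  proof -
    have "(a,w) = (a,0) + (0,w)" by simp
    then have "\<phi> (a,w) = \<phi> (a,0) + \<phi> (0,w)" using linear_add[OF lin] by metis
    then show ?thesis using phia im by simp
  qed
  have "omult (\<phi> (0,u)) (\<phi> (0,v)) = \<phi> (omult (0,u) (0,v))" for u v using hom by simp
  then have "(- inner (g *v u) (g *v v), cross7 (g *v u) (g *v v)) = (- inner u v, g *v cross7 u v)" for u v
    by (simp add: phi omult_def)
  then show ?thesis unfolding pres_def by simp
qed

lemma pres_G2: assumes "pres g" shows "g \<in> G2"
proof -
  have cr: "g *v cross7 u v = cross7 (g *v u) (g *v v)" and inn: "inner (g *v u) (g *v v) = inner u v" for u v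
    using assms unfolding pres_def by auto
  have ot: "orthogonal_transformation (\<lambda>x. g *v x)"
    unfolding orthogonal_transformation_def using inn by simp
  have sj: "surj (\<lambda>x. g *v x)" by (rule orthogonal_transformation_surj[OF ot])
  have ij: "inj (\<lambda>x. g *v x)" by (rule orthogonal_transformation_inj[OF ot])
  define \<phi> where "\<phi> = (\<lambda>p::octonion. (fst p, g *v snd p))"
  have lin: "linear \<phi>"
    by (rule linearI) (auto simp: \<phi>_def matrix_vector_right_distrib matrix_vector_mult_scaleR)
  have "inj \<phi>" unfolding \<phi>_def inj_def using ij by (auto simp: inj_def prod_eq_iff)
  moreover have "surj \<phi>"
  proof -
    have "(a, w) \<in> range \<phi>" for a w
    proof -
      obtain x where "w = g *v x" using sj by (metis surj_def)
      then have "\<phi> (a, x) = (a, w)" by (simp add: \<phi>_def)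
      then show ?thesis by (metis rangeI)
    qed
    then show ?thesis by auto
  qed
  ultimately have bj: "bij \<phi>" by (simp add: bij_def)
  have hom: "\<forall>p q. \<phi> (omult p q) = omult (\<phi> p) (\<phi> q)"
    by (auto simp: \<phi>_def omult_def inn cr matrix_vector_right_distrib matrix_vector_mult_scaleR)
  show ?thesis unfolding G2_def using lin bj hom by (auto simp: \<phi>_def)
qed

lemma g2_fwd: assumes h: "\<And>t. mexp (t *\<^sub>R X) \<in> G2" shows "isder X \<and> isskew X"
proof -
  have pr: "pres (mexp (t *\<^sub>R X))" for t using G2_pres h by blast
  have "X *v cross7 u v = cross7 (X *v u) v + cross7 u (X *v v)" for u v
  proof -
    have "(X *v cross7 u v) $ k = (cross7 (X *v u) v + cross7 u (X *v v)) $ k" for k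
    proof -
      have d1: "((\<lambda>s. (mexp (s *\<^sub>R X) *v cross7 u v) $ k) has_real_derivative
            (X *v (mexp (0 *\<^sub>R X) *v cross7 u v)) $ k) (at 0)"
        using vd_E unfolding vd_def by blast
      have d2: "((\<lambda>s. cross7 (mexp (s *\<^sub>R X) *v u) (mexp (s *\<^sub>R X) *v v) $ k) has_real_derivative
            (cross7 (X *v (mexp (0 *\<^sub>R X) *v u)) (mexp (0 *\<^sub>R X) *v v) + cross7 (mexp (0 *\<^sub>R X) *v u) (X *v (mexp (0 *\<^sub>R X) *v v))) $ k) (at 0)"
        using vd_cross[OF vd_E vd_E] unfolding vd_def by blast
      have eq: "(\<lambda>s. (mexp (s *\<^sub>R X) *v cross7 u v) $ k) = (\<lambda>s. cross7 (mexp (s *\<^sub>R X) *v u) (mexp (s *\<^sub>R X) *v v) $ k)"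
        using pr unfolding pres_def by simp
      have "(X *v (mexp (0 *\<^sub>R X) *v cross7 u v)) $ k = (cross7 (X *v (mexp (0 *\<^sub>R X) *v u)) (mexp (0 *\<^sub>R X) *v v) + cross7 (mexp (0 *\<^sub>R X) *v u) (X *v (mexp (0 *\<^sub>R X) *v v))) $ k"
        using DERIV_unique[OF d1[unfolded eq] d2] .
      then show ?thesis by simp
    qed
    then show ?thesis by (simp add: vec_eq_iff)
  qed
  moreover have "inner (X *v u) v = - inner u (X *v v)" for u v
  proof -
    have d: "((\<lambda>s. inner (mexp (s *\<^sub>R X) *v u) (mexp (s *\<^sub>R X) *v v)) has_real_derivative
       (inner (X *v (mexp (0 *\<^sub>R X) *v u)) (mexp (0 *\<^sub>R X) *v v) + inner (mexp (0 *\<^sub>R X) *v u) (X *v (mexp (0 *\<^sub>R X) *v v)))) (at 0)"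
      by (rule vd_inner[OF vd_E vd_E])
    have eq: "(\<lambda>s. inner (mexp (s *\<^sub>R X) *v u) (mexp (s *\<^sub>R X) *v v)) = (\<lambda>s. inner u v)"
      using pr unfolding pres_def by simp
    have "inner (X *v (mexp (0 *\<^sub>R X) *v u)) (mexp (0 *\<^sub>R X) *v v) + inner (mexp (0 *\<^sub>R X) *v u) (X *v (mexp (0 *\<^sub>R X) *v v)) = 0"
      using DERIV_unique[OF d[unfolded eq] DERIV_const] .
    then have "inner (X *v u) v + inner u (X *v v) = 0" by simp
    then show ?thesis by simp
  qed
  ultimately show ?thesis unfolding isder_def isskew_def by blast
qed

lemma g2_bwd: assumes der: "isder X" and sk: "isskew X" shows "pres (mexp (t *\<^sub>R X))"
proof -
  have "inner (mexp (t *\<^sub>R X) *v u) (mexp (t *\<^sub>R X) *v v) = inner u v" for u v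
  proof -
    have "\<forall>s. ((\<lambda>s. inner (mexp (s *\<^sub>R X) *v u) (mexp (s *\<^sub>R X) *v v)) has_real_derivative 0) (at s)"
    proof
      fix s
      have "((\<lambda>s. inner (mexp (s *\<^sub>R X) *v u) (mexp (s *\<^sub>R X) *v v)) has_real_derivative
       (inner (X *v (mexp (s *\<^sub>R X) *v u)) (mexp (s *\<^sub>R X) *v v) + inner (mexp (s *\<^sub>R X) *v u) (X *v (mexp (s *\<^sub>R X) *v v)))) (at s)"
        by (rule vd_inner[OF vd_E vd_E])
      then show "((\<lambda>s. inner (mexp (s *\<^sub>R X) *v u) (mexp (s *\<^sub>R X) *v v)) has_real_derivative 0) (at s)"
        using sk unfolding isskew_def by simp
    qed
    then have "inner (mexp (t *\<^sub>R X) *v u) (mexp (t *\<^sub>R X) *v v) = inner (mexp (0 *\<^sub>R X) *v u) (mexp (0 *\<^sub>R X) *v v)"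
      by (rule DERIV_isconst_all)
    then show ?thesis by simp
  qed
  moreover have "mexp (t *\<^sub>R X) *v cross7 u v = cross7 (mexp (t *\<^sub>R X) *v u) (mexp (t *\<^sub>R X) *v v)" for u v
  proof -
    define G where "G = (\<lambda>s. mexp (s *\<^sub>R X) *v cross7 u v - cross7 (mexp (s *\<^sub>R X) *v u) (mexp (s *\<^sub>R X) *v v))"
    have "vd G (X *v G s) s" for s
    proof -
      have "vd G (X *v (mexp (s *\<^sub>R X) *v cross7 u v) - (cross7 (X *v (mexp (s *\<^sub>R X) *v u)) (mexp (s *\<^sub>R X) *v v) + cross7 (mexp (s *\<^sub>R X) *v u) (X *v (mexp (s *\<^sub>R X) *v v)))) s"
        unfolding G_def by (rule vd_diff[OF vd_E vd_cross[OF vd_E vd_E]])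
      moreover have "X *v (mexp (s *\<^sub>R X) *v cross7 u v) - (cross7 (X *v (mexp (s *\<^sub>R X) *v u)) (mexp (s *\<^sub>R X) *v v) + cross7 (mexp (s *\<^sub>R X) *v u) (X *v (mexp (s *\<^sub>R X) *v v))) = X *v G s"
        using der unfolding isder_def G_def by (simp add: matrix_vector_mult_diff_distrib)
      ultimately show ?thesis by simp
    qed
    moreover have "G 0 = 0" by (simp add: G_def E_zero)
    ultimately have "G t = 0" using skew_ode[OF sk] by blast
    then show ?thesis by (simp add: G_def)
  qed
  ultimately show ?thesis unfolding pres_def by blast
qed

lemma g2_char: "X \<in> g2 \<longleftrightarrow> isder X \<and> isskew X"
  unfolding g2_def lie_algebra_def using g2_fwd g2_bwd pres_G2 by blast

lemma k_char: "X \<in> k_alg i \<longleftrightarrow> isder X \<and> isskew X \<and> X *v i = 0"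
proof
  assume h: "X \<in> k_alg i"
  then have h1: "\<And>t. mexp (t *\<^sub>R X) \<in> G2" and h2: "\<And>t. mexp (t *\<^sub>R X) *v i = i"
    unfolding k_alg_def lie_algebra_def K_stab_def by auto
  have "(X *v i) $ k = 0" for k
  proof -
    have d1: "((\<lambda>s. (mexp (s *\<^sub>R X) *v i) $ k) has_real_derivative (X *v (mexp (0 *\<^sub>R X) *v i)) $ k) (at 0)"
      using vd_E unfolding vd_def by blast
    have eq: "(\<lambda>s. (mexp (s *\<^sub>R X) *v i) $ k) = (\<lambda>s. i $ k)" using h2 by simp
    have "(X *v (mexp (0 *\<^sub>R X) *v i)) $ k = 0" using DERIV_unique[OF d1[unfolded eq] DERIV_const] .
    then show ?thesis by simp
  qed
  then show "isder X \<and> isskew X \<and> X *v i = 0" using g2_fwd[OF h1] by (simp add: vec_eq_iff)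
next
  assume h: "isder X \<and> isskew X \<and> X *v i = 0"
  have "mexp (t *\<^sub>R X) *v i = i" for t
  proof -
    define G where "G = (\<lambda>s. mexp (s *\<^sub>R X) *v i - i)"
    have "vd G (X *v G s) s" for s
    proof -
      have "vd G (X *v (mexp (s *\<^sub>R X) *v i) - 0) s"
        unfolding G_def by (rule vd_diff[OF vd_E vd_const])
      then show ?thesis using h by (simp add: G_def matrix_vector_mult_diff_distrib)
    qed
    moreover have "G 0 = 0" by (simp add: G_def E_zero)
    ultimately have "G t = 0" using skew_ode h by blast
    then show ?thesis by (simp add: G_def)
  qed
  then show "X \<in> k_alg i" using h g2_bwd pres_G2
    unfolding k_alg_def lie_algebra_def K_stab_def by blast
qed



definition outer :: "real^7 \<Rightarrow> real^7 \<Rightarrow> real^7^7" where "outer a b = (\<chi> r s. a$r * b$s)"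
definition Wm :: "real^7 \<Rightarrow> real^7 \<Rightarrow> real^7^7" where "Wm a b = outer b a - outer a b"
definition Lm :: "real^7 \<Rightarrow> real^7^7" where "Lm c = matrix (cross7 c)"
definition Pm :: "real^7 \<Rightarrow> real^7 \<Rightarrow> real^7^7" where
  "Pm i u = (3/4) *\<^sub>R Wm i u + (1/4) *\<^sub>R (Lm i ** Lm u - Lm u ** Lm i)"

lemma outer_mv: "outer a b *v x = inner b x *\<^sub>R a"
  by (simp add: outer_def matrix_vector_mult_def vec_eq_iff inner_vec_def sum_distrib_left mult_ac)

lemma Lm_mv: "Lm c *v x = cross7 c x"
  unfolding Lm_def using fun_cong[OF matrix_vector_mul(2)[OF linear_cross7]] by simp

lemma Pm_mv: "Pm i u *v x = (3/4) *\<^sub>R (inner i x *\<^sub>R u - inner u x *\<^sub>R i) + (1/4) *\<^sub>R (cross7 i (cross7 u x) - cross7 u (cross7 i x))"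
  unfolding Pm_def Wm_def
  by (simp add: matrix_vector_mult_add_rdistrib matrix_vector_mult_diff_rdistrib scaleR_mv outer_mv
      matrix_vector_mul_assoc[symmetric] Lm_mv)

lemma Pm_der: "isder (Pm i u)"
  unfolding isder_def Pm_mv
  unfolding vc by (intro allI conjI; algebra)

lemma Pm_skew: "isskew (Pm i u)"
  unfolding isskew_def Pm_mv
  unfolding vc by (intro allI; algebra)

lemma Pm_i: "Pm i u *v i = inner i i *\<^sub>R u - inner i u *\<^sub>R i"
  unfolding Pm_mv unfolding vc by (intro conjI; algebra)

lemma Pm_gen: "Pm i w *v x = (1/2 * inner i x) *\<^sub>R w - inner w x *\<^sub>R i + (1/2) *\<^sub>R cross7 i (cross7 w x) + (1/2 * inner i w) *\<^sub>R x"
  unfolding Pm_mv unfolding vc by (intro conjI; algebra)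

lemma Pm_scale: "Pm i (c *\<^sub>R u) = c *\<^sub>R Pm i u"
  unfolding matrix_eq scaleR_mv Pm_mv unfolding vc by (intro allI conjI; algebra)

lemma Pm_zero: "Pm i 0 = 0"
  using Pm_scale[of i 0 0] by simp

lemma inner_cross_self: "inner (cross7 a b) a = 0"
  unfolding vc by algebra

lemma inner_cc: "inner (cross7 a (cross7 b c)) d = - inner b (cross7 c (cross7 a d))"
  unfolding vc by algebra

lemma mm_diff_l: "(A - B) ** (C::real^7^7) = A ** C - B ** C"
  by (simp add: matrix_matrix_mult_def vec_eq_iff sum_subtractf algebra_simps)
lemma mm_add_l: "(A + B) ** (C::real^7^7) = A ** C + B ** C"
  by (simp add: matrix_matrix_mult_def vec_eq_iff sum.distrib algebra_simps)
lemma trace_scaleR: "trace (c *\<^sub>R (A::real^7^7)) = c * trace A"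
  by (simp add: trace_def sum_distrib_left)

lemma form0_diff: "form0 (A - B) C = form0 A C - form0 B (C::real^7^7)"
  unfolding form0_def by (simp add: mm_diff_l trace_sub)

lemma isder_diff: "isder A \<Longrightarrow> isder B \<Longrightarrow> isder (A - B)"
  unfolding isder_def by (simp add: matrix_vector_mult_diff_rdistrib C_diff_l C_diff_r algebra_simps)
lemma isskew_diff: "isskew A \<Longrightarrow> isskew B \<Longrightarrow> isskew (A - B)"
  unfolding isskew_def by (simp add: matrix_vector_mult_diff_rdistrib inner_diff_left inner_diff_right)

lemma br_mv: "lie_bracket A B *v x = A *v (B *v x) - B *v (A *v x)"
  unfolding lie_bracket_def by (simp add: matrix_vector_mult_diff_rdistrib matrix_vector_mul_assoc)

lemma isder_br: assumes "isder A" "isder B" shows "isder (lie_bracket A B)"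
proof -
  have a: "A *v cross7 u v = cross7 (A *v u) v + cross7 u (A *v v)"
   and b: "B *v cross7 u v = cross7 (B *v u) v + cross7 u (B *v v)" for u v
    using assms unfolding isder_def by auto
  show ?thesis unfolding isder_def br_mv
    by (simp add: a b matrix_vector_right_distrib C_diff_l C_diff_r algebra_simps)
qed

lemma isskew_br: assumes "isskew A" "isskew B" shows "isskew (lie_bracket A B)"
proof -
  have a: "inner (A *v u) v = - inner u (A *v v)"
   and b: "inner (B *v u) v = - inner u (B *v v)" for u v
    using assms unfolding isskew_def by auto
  show ?thesis unfolding isskew_def br_mv
    by (simp add: a b inner_diff_left inner_diff_right)
qed

lemma trace_outer: "trace (outer a b ** Z) = inner b (Z *v a)"
proof -
  have "trace (outer a b ** Z) = (\<Sum>r\<in>UNIV. \<Sum>s\<in>UNIV. b$s * (Z$s$r * a$r))"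
    unfolding trace_def outer_def matrix_matrix_mult_def
    by (intro sum.cong refl) (simp add: mult_ac)
  also have "\<dots> = (\<Sum>s\<in>UNIV. \<Sum>r\<in>UNIV. b$s * (Z$s$r * a$r))" by (rule sum.swap)
  also have "\<dots> = inner b (Z *v a)" by (simp add: inner_vec_def matrix_vector_mult_def sum_distrib_left)
  finally show ?thesis .
qed

lemma Pm_trace: assumes der: "isder Z" and sk: "isskew Z" and zi: "Z *v i = 0"
  shows "trace (Pm i u ** Z) = 0"
proof -
  have tw: "trace (Wm i u ** Z) = 0"
  proof -
    have "trace (Wm i u ** Z) = inner i (Z *v u) - inner u (Z *v i)"
      unfolding Wm_def by (simp add: mm_diff_l trace_sub trace_outer)
    also have "\<dots> = 0" using sk zi unfolding isskew_def
      by (metis diff_zero inner_zero_left inner_zero_right neg_equal_0_iff_equal)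
    finally show ?thesis .
  qed
  have com: "Lm i ** Z = Z ** Lm i"
    unfolding matrix_eq
  proof
    fix x
    have "Z *v cross7 i x = cross7 (Z *v i) x + cross7 i (Z *v x)" using der unfolding isder_def by blast
    then show "(Lm i ** Z) *v x = (Z ** Lm i) *v x"
      by (simp add: matrix_vector_mul_assoc[symmetric] Lm_mv zi)
  qed
  have "trace (Lm u ** Lm i ** Z) = trace (Lm i ** Lm u ** Z)"
  proof -
    have "trace (Lm u ** Lm i ** Z) = trace (Lm u ** (Z ** Lm i))"
      by (simp add: matrix_mul_assoc[symmetric] com)
    also have "\<dots> = trace ((Lm u ** Z) ** Lm i)" by (simp add: matrix_mul_assoc)
    also have "\<dots> = trace (Lm i ** (Lm u ** Z))" by (rule trace_mul_sym)
    also have "\<dots> = trace (Lm i ** Lm u ** Z)" by (simp add: matrix_mul_assoc)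
    finally show ?thesis .
  qed
  then show ?thesis
    unfolding Pm_def
    by (simp add: mm_add_l mm_diff_l scalar_matrix_assoc[symmetric] trace_add trace_sub trace_scaleR tw)
qed

lemma mv_axis: "(D *v axis a 1) $ b = (D::real^7^7) $ b $ a"
  by (simp add: matrix_vector_mult_basis column_def)

lemma ax_inner1: "inner (axis b 1) (x::real^7) = x $ b" by (metis cart_eq_inner_axis inner_commute)
lemma ax_inner2: "inner (x::real^7) (axis b 1) = x $ b" by (metis cart_eq_inner_axis)

lemma form0_zero: assumes sk: "isskew D" and f: "form0 D D = 0" shows "D = 0"
proof -
  have skc: "D $ b $ a = - D $ a $ b" for a b
  proof -
    have "inner (D *v axis a 1) (axis b 1) = - inner (axis a 1) (D *v axis b 1)"
      using sk unfolding isskew_def by blast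
    then show ?thesis by (simp add: ax_inner1 ax_inner2 mv_axis)
  qed
  have "trace (D ** D) = (\<Sum>a\<in>UNIV. \<Sum>b\<in>UNIV. D $ a $ b * D $ b $ a)"
    by (simp add: trace_def matrix_matrix_mult_def)
  also have "\<dots> = (\<Sum>a\<in>UNIV. \<Sum>b\<in>UNIV. (- ((D $ a $ b)^2)))"
    by (intro sum.cong refl) (metis skc mult_minus_right power2_eq_square)
  also have "\<dots> = - (\<Sum>a\<in>UNIV. \<Sum>b\<in>UNIV. (D $ a $ b)^2)" by (simp add: sum_negf)
  finally have "trace (D ** D) = - (\<Sum>a\<in>UNIV. \<Sum>b\<in>UNIV. (D $ a $ b)^2)" .
  with f have s0: "(\<Sum>a\<in>UNIV. \<Sum>b\<in>UNIV. (D $ a $ b)^2) = 0" unfolding form0_def by simp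
  have "\<forall>a\<in>UNIV. (\<Sum>b\<in>UNIV. (D $ a $ b)^2) = 0"
    using s0 by (subst sum_nonneg_eq_0_iff[symmetric]) (auto intro: sum_nonneg)
  then have "\<forall>a b. (D $ a $ b)^2 = 0"
    by (subst (asm) sum_nonneg_eq_0_iff) auto
  then show ?thesis by (simp add: vec_eq_iff)
qed



lemma inner_i_Xi: assumes "isskew X" shows "inner i (X *v i) = 0"
proof -
  have "inner (X *v i) i = - inner i (X *v i)" using assms unfolding isskew_def by blast
  then have "inner i (X *v i) = - inner i (X *v i)" by (simp add: inner_commute)
  then show ?thesis by linarith
qed

lemma Pm_in_p: "Pm i u \<in> p_space i"
  unfolding p_space_def g2_char form0_def
  using Pm_der Pm_skew Pm_trace k_char by auto

lemma Pm_i1: "inner i i = 1 \<Longrightarrow> inner i u = 0 \<Longrightarrow> Pm i u *v i = u"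
  by (simp add: Pm_i)

lemma p_eq_P: assumes i1: "inner i i = 1" and X: "X \<in> p_space i" shows "X = Pm i (X *v i)"
proof -
  have Xd: "isder X" "isskew X" and ort: "\<forall>Z\<in>k_alg i. form0 X Z = 0"
    using X unfolding p_space_def g2_char by auto
  define D where "D = X - Pm i (X *v i)"
  have iu: "inner i (X *v i) = 0" using inner_i_Xi Xd(2) .
  have Dk: "D \<in> k_alg i"
    unfolding k_char D_def using Xd Pm_der Pm_skew isder_diff isskew_diff Pm_i1[OF i1 iu]
    by (simp add: matrix_vector_mult_diff_rdistrib)
  have "form0 D D = form0 X D - form0 (Pm i (X *v i)) D" unfolding D_def by (rule form0_diff)
  also have "\<dots> = 0" using ort Dk Pm_in_p[of i "X *v i"] unfolding p_space_def by auto
  finally have f: "form0 D D = 0" .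
  have sk: "isskew D" using Dk k_char by blast
  have "D = 0" by (rule form0_zero[OF sk f])
  then show ?thesis unfolding D_def by simp
qed

lemma kpart_eq: assumes i1: "inner i i = 1" and W: "isder W" "isskew W"
  shows "k_part i W = W - Pm i (W *v i)"
proof -
  have iw: "inner i (W *v i) = 0" using inner_i_Xi W(2) .
  have Z0k: "W - Pm i (W *v i) \<in> k_alg i"
    unfolding k_char using W Pm_der Pm_skew isder_diff isskew_diff Pm_i1[OF i1 iw]
    by (simp add: matrix_vector_mult_diff_rdistrib)
  have Z0p: "W - (W - Pm i (W *v i)) \<in> p_space i" using Pm_in_p by simp
  show ?thesis unfolding k_part_def
  proof (rule the_equality)
    show "W - Pm i (W *v i) \<in> k_alg i \<and> W - (W - Pm i (W *v i)) \<in> p_space i" using Z0k Z0p by blast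
  next
    fix Z assume h: "Z \<in> k_alg i \<and> W - Z \<in> p_space i"
    define D where "D = Z - (W - Pm i (W *v i))"
    have Zk: "isder Z" "isskew Z" "Z *v i = 0" using h k_char by auto
    have Z0k': "isder (W - Pm i (W *v i))" "isskew (W - Pm i (W *v i))" "(W - Pm i (W *v i)) *v i = 0"
      using Z0k k_char by auto
    have Dk: "D \<in> k_alg i" unfolding k_char D_def
      using Zk Z0k' isder_diff isskew_diff by (simp add: matrix_vector_mult_diff_rdistrib)
    have "D = Pm i (W *v i) - (W - Z)" unfolding D_def by simp
    then have "form0 D D = form0 (Pm i (W *v i)) D - form0 (W - Z) D" by (simp add: form0_diff)
    also have "\<dots> = 0" using Dk Pm_in_p h unfolding p_space_def by auto
    finally have f: "form0 D D = 0" .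
    have sk: "isskew D" using Dk k_char by blast
    have "D = 0" by (rule form0_zero[OF sk f])
    then show "Z = W - Pm i (W *v i)" unfolding D_def by simp
  qed
qed

lemma arith1: "(w::real) = - c2 + nn / 4 + P \<Longrightarrow> w = nn / 2 \<Longrightarrow> nn = cc - o2 \<Longrightarrow> cc = P - c2 \<Longrightarrow> 3 * (P - c2) + o2 = 0"
  by (simp add: field_simps)

theorem mainTheorem7:
  fixes i :: "real^7" and X Y :: "real^7^7"
  assumes "norm i = 1"
    and "X \<in> p_space i" and "Y \<in> p_space i"
  shows "lie_bracket X Y = 0 \<longleftrightarrow> k_part i (lie_bracket X Y) = 0"
proof -
  have i1: "inner i i = 1" using assms(1) by (simp add: norm_eq_1)
  define u where "u = X *v i"
  define v where "v = Y *v i"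
  have Xe: "X = Pm i u" unfolding u_def by (rule p_eq_P[OF i1 assms(2)])
  have Ye: "Y = Pm i v" unfolding v_def by (rule p_eq_P[OF i1 assms(3)])
  have iu: "inner i u = 0" unfolding u_def using assms(2) inner_i_Xi unfolding p_space_def g2_char by blast
  have iv: "inner i v = 0" unfolding v_def using assms(3) inner_i_Xi unfolding p_space_def g2_char by blast
  define W where "W = lie_bracket X Y"
  have Wd: "isder W" "isskew W" unfolding W_def Xe Ye
    using isder_br isskew_br Pm_der Pm_skew by auto
  have kp: "k_part i W = W - Pm i (W *v i)" by (rule kpart_eq[OF i1 Wd])
  define n where "n = cross7 i (cross7 u v)"
  define c where "c = inner u v"
  have pvu: "Pm i v *v u = - c *\<^sub>R i - (1/2) *\<^sub>R n"
    using Pm_gen[of i v u] iu iv by (simp add: n_def c_def C_anti[of u v] C_uminus_r inner_commute)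
  have puv: "Pm i u *v v = - c *\<^sub>R i + (1/2) *\<^sub>R n"
    using Pm_gen[of i u v] iu iv by (simp add: n_def c_def inner_commute)
  have puu: "Pm i u *v u = - (inner u u) *\<^sub>R i"
    using Pm_gen[of i u u] iu by simp
  have pvv: "Pm i v *v v = - (inner v v) *\<^sub>R i"
    using Pm_gen[of i v v] iv by simp
  have Xi: "X *v i = u" and Yi: "Y *v i = v" by (simp_all add: u_def v_def)
  have Wi: "W *v i = n"
  proof -
    have "W *v i = X *v v - Y *v u" unfolding W_def br_mv Xi Yi ..
    also have "\<dots> = Pm i u *v v - Pm i v *v u" using Xe Ye by simp
    also have "\<dots> = n" unfolding puv pvu by (simp add: vec_eq_iff)
    finally show ?thesis .
  qed
  have in_n: "inner i n = 0" unfolding n_def using inner_cross_self[of i "cross7 u v"]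
    by (simp add: inner_commute)
  show ?thesis
  proof
    assume "lie_bracket X Y = 0"
    then show "k_part i (lie_bracket X Y) = 0"
      using kp unfolding W_def by (simp add: Pm_zero)
  next
    assume "k_part i (lie_bracket X Y) = 0"
    then have WP: "W = Pm i n" using kp Wi unfolding W_def by simp
    have nu: "inner i (cross7 n u) = inner i (cross7 n u)" ..
    have lhs: "inner (W *v u) v = - (c^2) + inner n n / 4 + inner u u * inner v v"
    proof -
      have sX: "inner (X *v a) b = - inner a (X *v b)" and sY: "inner (Y *v a) b = - inner a (Y *v b)" for a b
        using Pm_skew Xe Ye unfolding isskew_def by metis+
      have "inner (W *v u) v = inner (X *v (Y *v u)) v - inner (Y *v (X *v u)) v"
        unfolding W_def br_mv by (simp add: inner_diff_left)
      also have "\<dots> = - inner (Y *v u) (X *v v) + inner (X *v u) (Y *v v)"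
        using sX sY by simp
      also have "\<dots> = - inner (- c *\<^sub>R i - (1/2) *\<^sub>R n) (- c *\<^sub>R i + (1/2) *\<^sub>R n) + inner (- (inner u u) *\<^sub>R i) (- (inner v v) *\<^sub>R i)"
        using pvu puv puu pvv Xe Ye by simp
      also have "\<dots> = - (c^2) + inner n n / 4 + inner u u * inner v v"
        using i1 in_n by (simp add: inner_simps inner_commute[of n i] power2_eq_square algebra_simps)
      finally show ?thesis .
    qed
    have rhs: "inner (W *v u) v = inner n n / 2"
    proof -
      have "Pm i n *v u = - (inner n u) *\<^sub>R i + (1/2) *\<^sub>R cross7 i (cross7 n u)"
        using Pm_gen[of i n u] iu in_n by simp
      then have "inner (Pm i n *v u) v = (1/2) * inner (cross7 i (cross7 n u)) v"
        using iv by (simp add: inner_simps inner_commute[of i v])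
      also have "\<dots> = - (1/2) * inner n (cross7 u (cross7 i v))" by (simp add: inner_cc)
      also have "cross7 u (cross7 i v) = c *\<^sub>R i - n"
        using I5[of u i v] iu iv by (simp add: n_def c_def inner_commute algebra_simps)
      finally show ?thesis using in_n WP by (simp add: inner_simps inner_commute[of n i])
    qed
    have nn: "inner n n = inner (cross7 u v) (cross7 u v) - (inner i (cross7 u v))^2"
      unfolding n_def C_norm i1 by simp
    have uv: "inner (cross7 u v) (cross7 u v) = inner u u * inner v v - c^2"
      unfolding C_norm c_def ..
    define A where "A = inner u u * inner v v - c^2"
    have A0: "A \<ge> 0" unfolding A_def using uv by (metis inner_ge_zero)
    have "3 * A + (inner i (cross7 u v))^2 = 0" unfolding A_def by (rule arith1[OF lhs rhs nn uv])
    moreover have "(inner i (cross7 u v))^2 \<ge> 0" by simp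
    ultimately have A00: "A = 0" using A0 by linarith
    show "lie_bracket X Y = 0"
    proof (cases "u = 0")
      case True
      then have "X = 0" using Xe Pm_zero by simp
      then show ?thesis by (simp add: lie_bracket_def)
    next
      case False
      then have uu: "inner u u > 0" by simp
      define l where "l = c / inner u u"
      have "inner (v - l *\<^sub>R u) (v - l *\<^sub>R u) = inner v v - 2 * l * c + l^2 * inner u u"
        by (simp add: inner_simps c_def inner_commute power2_eq_square algebra_simps)
      also have "\<dots> = A / inner u u"
        using uu unfolding l_def A_def by (simp add: field_simps power2_eq_square)
      finally have "v - l *\<^sub>R u = 0" using A00 by simp
      then have "v = l *\<^sub>R u" by simp
      then have "Y = l *\<^sub>R X" using Xe Ye Pm_scale by simp
      then show ?thesis
        by (simp add: lie_bracket_def matrix_scalar_ac scalar_matrix_assoc[symmetric])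
    qed
  qed
qed

end
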